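(* Let $(X,d)$ be a complete metric space and $f:X\to\mathbb{R}\cup\{+\infty\}$ a proper lower semicontinuous function with $\inf_Xf=0$. Then $f=\mathrm{lsc}(\mathcal{I}[f])$ on $X$, where \[\mathcal{I}[f](x):=\inf\Big\{\sum_{n=0}^\infty G[f](x_n)d(x_n,x_{n+1}):\{x_n\}_n\subset X,\ x_0=x,\ \lim_{n\to\infty}G[f](x_n)=0\Big\}.\]
   Context: Global slope: $G[f](x)=\sup_{y\neq x}\frac{(f(x)-f(y))_+}{d(x,y)}$ if $f(x)<+\infty$ and $G[f](x)=+\infty$ otherwise ($\alpha_+=\max\{\alpha,0\}$). For $g:X\to\mathbb{R}\cup\{+\infty\}$, its lower semicontinuous envelope is $\mathrm{lsc}(g)(x)=\liminf_{y\to x}g(y)$ (with $y=x$ allowed). Proper means not identically $+\infty$. *)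

theory Defs
  imports "HOL-Analysis.Analysis"
begin

definition lsc_fun :: "('a::metric_space \<Rightarrow> ereal) \<Rightarrow> bool" where
  "lsc_fun f \<longleftrightarrow> (\<forall>x. f x \<le> Liminf (at x) f)"

text \<open>Lower semicontinuous envelope: liminf as y tends to x, with y = x allowed.\<close>
definition lsc_env :: "('a::metric_space \<Rightarrow> ereal) \<Rightarrow> 'a \<Rightarrow> ereal" where
  "lsc_env g x = Liminf (nhds x) g"

text \<open>Global slope. The supremum of nonnegative quantities over an empty index set
  (one-point space) is taken to be 0, hence the inserted 0.\<close>
definition global_slope :: "('a::metric_space \<Rightarrow> ereal) \<Rightarrow> 'a \<Rightarrow> ereal" where
  "global_slope f x =
     (if f x < \<infinity>
      then Sup (insert 0 ((\<lambda>y. max (f x - f y) 0 / ereal (dist x y)) ` {y. y \<noteq> x}))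
      else \<infinity>)"

definition I_fun :: "('a::metric_space \<Rightarrow> ereal) \<Rightarrow> 'a \<Rightarrow> ereal" where
  "I_fun f x = Inf {(\<Sum>n. global_slope f (xs n) * ereal (dist (xs n) (xs (Suc n)))) | xs.
                     xs 0 = x \<and> (\<lambda>n. global_slope f (xs n)) \<longlonglongrightarrow> 0}"

end

theory Submission
  imports Defs
begin


lemma lsc_nhds:
  assumes "lsc_fun f" "c < f x"
  shows "eventually (\<lambda>y. c < f y) (nhds x)"
proof -
  have "c < Liminf (at x) f" using assms unfolding lsc_fun_def by (meson less_le_trans)
  then have "eventually (\<lambda>y. c < f y) (at x)" by (rule less_LiminfD)
  then have "eventually (\<lambda>y. y \<noteq> x \<longrightarrow> c < f y) (nhds x)"
    by (simp add: eventually_at_filter)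
  then show ?thesis by eventually_elim (use assms(2) in auto)
qed

lemma lsc_seq:
  fixes f :: "'a::metric_space \<Rightarrow> ereal"
  assumes lsc: "lsc_fun f" and X: "X \<longlonglongrightarrow> y" and le: "\<And>n. f (X n) + ereal (l * dist x (X n)) \<le> ereal c"
    and l: "l \<ge> 0"
  shows "f y + ereal (l * dist x y) \<le> ereal c"
proof (rule ccontr)
  assume "\<not> ?thesis"
  then have lt: "ereal c < f y + ereal (l * dist x y)" by simp
  define t where "t = c - l * dist x y"
  have "ereal t < f y" using lt unfolding t_def by (cases "f y") auto
  then obtain c' where c': "t < c'" "ereal c' < f y"
  proof (cases "f y")
    case (real v) then show ?thesis using \<open>ereal t < f y\<close> that[of "(t+v)/2"] by auto
  next
    case PInf then show ?thesis using that[of "t+1"] by auto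
  next
    case MInf then show ?thesis using \<open>ereal t < f y\<close> by auto
  qed
  define \<eta> where "\<eta> = (c' - t) / (l + 1)"
  have eta: "\<eta> > 0" using c' l unfolding \<eta>_def by auto
  have "l * \<eta> < c' - t"
  proof -
    have "l * \<eta> = (c' - t) * (l / (l+1))" unfolding \<eta>_def by (simp add: field_simps)
    also have "\<dots> < (c' - t) * 1" using c' l by (intro mult_strict_left_mono) auto
    finally show ?thesis by simp
  qed
  have ev1: "eventually (\<lambda>n. ereal c' < f (X n)) sequentially"
    using lsc_nhds[OF lsc c'(2)] X unfolding filterlim_iff by blast
  have "((\<lambda>n. dist x (X n)) \<longlongrightarrow> dist x y) sequentially"
    by (intro tendsto_intros X)
  then have ev2: "eventually (\<lambda>n. dist x y - \<eta> < dist x (X n)) sequentially"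
    using eta by (intro order_tendstoD) auto
  have "eventually (\<lambda>n. False) sequentially"
    using ev1 ev2
  proof eventually_elim
    case (elim n)
    have "l * (dist x y - \<eta>) \<le> l * dist x (X n)" using elim l by (intro mult_left_mono) auto
    then have "c < c' + l * dist x (X n)" using \<open>l * \<eta> < c' - t\<close> unfolding t_def by (simp add: algebra_simps)
    then have "ereal c < f (X n) + ereal (l * dist x (X n))"
      using elim(1) by (cases "f (X n)") auto
    then show False using le[of n] by simp
  qed
  then show False by simp
qed

lemma ekeland:
  fixes f :: "'a::complete_space \<Rightarrow> ereal"
  assumes lsc: "lsc_fun f" and nn: "\<And>x. f x \<ge> 0" and fin: "f x0 < \<infinity>" and l: "l > 0"
  shows "\<exists>z. f z + ereal (l * dist z x0) \<le> f x0 \<and> (\<forall>y. f z \<le> f y + ereal (l * dist y z))"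
proof -
  define F where "F y = real_of_ereal (f y)" for y
  define S where "S x = {y. f y < \<infinity> \<and> F y + l * dist x y \<le> F x}" for x
  have fF: "f y = ereal (F y)" if "f y < \<infinity>" for y
    using that nn[of y] unfolding F_def by (cases "f y") auto
  have Fnn: "F y \<ge> 0" for y using nn[of y] unfolding F_def by (cases "f y") auto
  define m where "m x = Inf (F ` S x)" for x
  have xS: "x \<in> S x" if "f x < \<infinity>" for x using that unfolding S_def by auto
  have bdd: "bdd_below (F ` S x)" for x using Fnn by (intro bdd_belowI[of _ 0]) auto
  have mle: "m x \<le> F y" if "y \<in> S x" for x y
    unfolding m_def using that bdd by (intro cInf_lower) auto
  have ex: "\<exists>y. y \<in> S x \<and> F y \<le> m x + e" if fx: "f x < \<infinity>" and e: "e > 0" for x e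
  proof -
    have "Inf (F ` S x) < m x + e" using e unfolding m_def by simp
    then obtain y where "y \<in> S x" "F y < m x + e"
      using cInf_lessD[of "F ` S x" "m x + e"] xS[OF fx] by blast
    then show ?thesis by (intro exI[of _ y]) auto
  qed
  have trans: "z \<in> S x" if "y \<in> S x" "z \<in> S y" for x y z
  proof -
    have "dist x z \<le> dist x y + dist y z" by (rule dist_triangle)
    then have "l * dist x z \<le> l * dist x y + l * dist y z" using l
      by (metis distrib_left less_eq_real_def mult_left_mono)
    then show ?thesis using that unfolding S_def by auto
  qed
  define nx where "nx x n = (SOME y. y \<in> S x \<and> F y \<le> m x + 1 / real (Suc n))" for x n
  define xs where "xs = rec_nat x0 (\<lambda>n x. nx x n)"
  have xs0: "xs 0 = x0" and xsS: "xs (Suc n) = nx (xs n) n" for n by (simp_all add: xs_def)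
  have nxP: "nx x n \<in> S x \<and> F (nx x n) \<le> m x + 1 / real (Suc n)" if "f x < \<infinity>" for x n
    unfolding nx_def by (rule someI_ex) (rule ex[OF that], simp)
  have finxs: "f (xs n) < \<infinity>" for n
  proof (induction n)
    case 0 then show ?case using fin xs0 by simp
  next
    case (Suc n) then show ?case using nxP[of "xs n" n] unfolding xsS S_def by auto
  qed
  have step: "xs (Suc n) \<in> S (xs n)" and stepm: "F (xs (Suc n)) \<le> m (xs n) + 1 / real (Suc n)" for n
    using nxP[OF finxs[of n], of n] unfolding xsS by auto
  have Sk: "S (xs k) \<subseteq> S (xs n)" if "n \<le> k" for n k
    using that
  proof (induction k rule: dec_induct)
    case base then show ?case by simp
  next
    case (step k) then show ?case using trans \<open>xs (Suc k) \<in> S (xs k)\<close> by blast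
  qed
  have inS: "xs k \<in> S (xs n)" if "n \<le> k" for n k using Sk[OF that] xS[OF finxs[of k]] by blast
  have key: "l * dist (xs (Suc n)) (xs k) \<le> 1 / real (Suc n)" if "Suc n \<le> k" for n k
  proof -
    have "F (xs k) + l * dist (xs (Suc n)) (xs k) \<le> F (xs (Suc n))"
      using inS[OF that] unfolding S_def by auto
    moreover have "m (xs n) \<le> F (xs k)" using mle inS that by simp
    ultimately show ?thesis using stepm[of n] by simp
  qed
  have "Cauchy xs"
  proof (rule metric_CauchyI)
    fix e :: real assume e: "e > 0"
    obtain N where N: "inverse (real (Suc N)) < e * l / 2" using reals_Archimedean[of "e * l / 2"] e l by auto
    have "dist (xs a) (xs b) < e" if "a \<ge> Suc N" "b \<ge> Suc N" for a b
    proof -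
      have "l * dist (xs (Suc N)) (xs a) \<le> 1 / real (Suc N)" "l * dist (xs (Suc N)) (xs b) \<le> 1 / real (Suc N)"
        using key that by auto
      then have "l * (dist (xs (Suc N)) (xs a) + dist (xs (Suc N)) (xs b)) < e * l"
        using N by (simp add: distrib_left inverse_eq_divide)
      then have "dist (xs (Suc N)) (xs a) + dist (xs (Suc N)) (xs b) < e" using l
        by (simp add: mult.commute)
      moreover have "dist (xs a) (xs b) \<le> dist (xs (Suc N)) (xs a) + dist (xs (Suc N)) (xs b)"
        by (metis dist_commute dist_triangle)
      ultimately show ?thesis by simp
    qed
    then show "\<exists>M. \<forall>m\<ge>M. \<forall>n\<ge>M. dist (xs m) (xs n) < e" by blast
  qed
  then obtain z where z: "xs \<longlonglongrightarrow> z" using Cauchy_convergent_iff convergent_def by blast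
  have zS: "z \<in> S (xs n)" for n
  proof -
    have lim: "(\<lambda>k. xs (k + n)) \<longlonglongrightarrow> z" using z by (rule LIMSEQ_ignore_initial_segment)
    have "f (xs (k + n)) + ereal (l * dist (xs n) (xs (k + n))) \<le> ereal (F (xs n))" for k
      using inS[of n "k + n"] fF[of "xs (k+n)"] unfolding S_def by auto
    from lsc_seq[OF lsc lim this] l
    have "f z + ereal (l * dist (xs n) z) \<le> ereal (F (xs n))" by simp
    then show ?thesis unfolding S_def using fF[of z] nn[of z]
      by (cases "f z") auto
  qed
  have c1: "f z + ereal (l * dist z x0) \<le> f x0"
    using zS[of 0] fF[of z] fF[OF fin] unfolding S_def xs0 by (auto simp: dist_commute)
  have c2: "f z \<le> f y + ereal (l * dist y z)" for y
  proof (cases "f y < \<infinity>")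
    case False then show ?thesis by simp
  next
    case True
    show ?thesis
    proof (rule ccontr)
      assume "\<not> ?thesis"
      then have lt: "F y + l * dist z y < F z"
        using fF[OF True] fF[of z] zS[of 0] unfolding S_def by (auto simp: dist_commute)
      then have yS: "y \<in> S z" using True unfolding S_def by auto
      have bnd: "F z - F y \<le> 1 / real (Suc n)" for n
      proof -
        have "y \<in> S (xs n)" using trans[OF zS yS] .
        then have "m (xs n) \<le> F y" by (rule mle)
        moreover have "F z + l * dist (xs (Suc n)) z \<le> F (xs (Suc n))"
          using zS[of "Suc n"] unfolding S_def by auto
        moreover have "l * dist (xs (Suc n)) z \<ge> 0" using l by simp
        ultimately show ?thesis using stepm[of n] by simp
      qed
      have pos: "F z - F y > 0" using lt l by (smt (verit) mult_nonneg_nonneg zero_le_dist)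
      obtain n where "inverse (real (Suc n)) < F z - F y" using reals_Archimedean[OF pos] by auto
      then show False using bnd[of n] by (simp add: field_simps)
    qed
  qed
  show ?thesis using c1 c2 by blast
qed



lemma G_nonneg: "global_slope f x \<ge> 0"
  unfolding global_slope_def by (auto intro: Sup_upper)

lemma G_upper:
  assumes "f x < \<infinity>" "y \<noteq> x"
  shows "max (f x - f y) 0 / ereal (dist x y) \<le> global_slope f x"
  unfolding global_slope_def using assms by (simp add: le_max_iff_disj) (rule disjI2, rule SUP_upper, simp)

lemma G_lower_real:
  assumes "f x = ereal a" "f y = ereal b" "y \<noteq> x"
  shows "ereal ((a - b) / dist x y) \<le> global_slope f x"
proof -
  have "ereal ((a - b) / dist x y) \<le> ereal (max (a - b) 0 / dist x y)"
    by (simp add: divide_right_mono)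
  also have "\<dots> = max (f x - f y) 0 / ereal (dist x y)"
    using assms by (simp add: max_def zero_ereal_def[symmetric])
  also have "\<dots> \<le> global_slope f x" using assms by (intro G_upper) auto
  finally show ?thesis .
qed

lemma G_le:
  assumes fin: "f z < \<infinity>" and nm: "\<And>y. f y \<noteq> -\<infinity>" and l: "l \<ge> 0"
    and H: "\<And>y. f z \<le> f y + ereal (l * dist y z)"
  shows "global_slope f z \<le> ereal l"
proof -
  obtain a where a: "f z = ereal a" using fin nm[of z] by (cases "f z") auto
  have "max (f z - f y) 0 / ereal (dist z y) \<le> ereal l" if "y \<noteq> z" for y
  proof (cases "f y")
    case (real b)
    have "a \<le> b + l * dist y z" using H[of y] a real by simp
    then have "max (a - b) 0 \<le> l * dist z y" using l by (simp add: dist_commute)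
    then have "max (a - b) 0 / dist z y \<le> l" using that
      by (simp add: divide_le_eq)
    then show ?thesis using a real that l by (auto simp: max_def zero_ereal_def[symmetric] split: if_splits)
  next
    case PInf then show ?thesis using a l by simp
  next
    case MInf then show ?thesis using nm by simp
  qed
  then show ?thesis unfolding global_slope_def using fin l by (auto intro!: Sup_least)
qed

lemma step_ineq:
  assumes nn: "\<And>y. f y \<ge> 0"
  shows "f x \<le> f y + global_slope f x * ereal (dist x y)"
proof (cases "y = x")
  case True then show ?thesis by (simp add: zero_ereal_def[symmetric])
next
  case ne: False
  show ?thesis
  proof (cases "f x < \<infinity>")
    case False
    then have "global_slope f x = \<infinity>" unfolding global_slope_def by simp
    then have "global_slope f x * ereal (dist x y) = \<infinity>" using ne by simp
    then show ?thesis using nn[of y] by simp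
  next
    case True
    obtain a where a: "f x = ereal a" using True nn[of x] by (cases "f x") auto
    show ?thesis
    proof (cases "f y")
      case (real b)
      have "ereal ((a - b) / dist x y) * ereal (dist x y) \<le> global_slope f x * ereal (dist x y)"
        using G_lower_real[OF a real ne] by (intro ereal_mult_right_mono) auto
      moreover have "ereal ((a - b) / dist x y) * ereal (dist x y) = ereal (a - b)" using ne by simp
      ultimately show ?thesis using a real by (cases "global_slope f x * ereal (dist x y)") auto
    next
      case PInf then show ?thesis using G_nonneg[of f x] by simp
    next
      case MInf then show ?thesis using nn[of y] by simp
    qed
  qed
qed



lemma lower_bound:
  fixes f :: "'a::metric_space \<Rightarrow> ereal"
  assumes nn: "\<And>y. f y \<ge> 0" and inf0: "(INF x. f x) = 0" and x0: "xs 0 = x"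
    and lim: "(\<lambda>n. global_slope f (xs n)) \<longlonglongrightarrow> 0"
  shows "f x \<le> (\<Sum>n. global_slope f (xs n) * ereal (dist (xs n) (xs (Suc n))))"
proof (rule ccontr)
  define a where "a n = global_slope f (xs n) * ereal (dist (xs n) (xs (Suc n)))" for n
  define d where "d n = dist (xs n) (xs (Suc n))" for n
  have ann: "a n \<ge> 0" for n unfolding a_def using G_nonneg[of f "xs n"] by simp
  have part: "f x \<le> f (xs N) + (\<Sum>n<N. a n)" for N
  proof (induction N)
    case 0 then show ?case using x0 by simp
  next
    case (Suc N)
    have "f x \<le> f (xs N) + (\<Sum>n<N. a n)" by (rule Suc)
    also have "\<dots> \<le> (f (xs (Suc N)) + a N) + (\<Sum>n<N. a n)"
      unfolding a_def by (intro add_right_mono step_ineq nn)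
    also have "\<dots> = f (xs (Suc N)) + (\<Sum>n<Suc N. a n)" by (simp add: ac_simps)
    finally show ?case .
  qed
  assume "\<not> ?thesis"
  then have Slt: "suminf a < f x" unfolding a_def by simp
  have "suminf a \<ge> 0" using suminf_upper[of a 0] ann by simp
  then obtain s where s: "suminf a = ereal s" using Slt by (cases "suminf a") auto
  obtain c where c: "c > 0" "ereal (s + c) \<le> f x"
  proof (cases "f x")
    case (real v) then show ?thesis using Slt s that[of "v - s"] by auto
  next
    case PInf then show ?thesis using that[of 1] by auto
  next
    case MInf then show ?thesis using nn[of x] by auto
  qed
  have Pfin: "\<exists>p. (\<Sum>n<N. a n) = ereal p \<and> p \<le> s" for N
  proof -
    have "(\<Sum>n<N. a n) \<le> suminf a" using ann by (rule suminf_upper)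
    moreover have "(\<Sum>n<N. a n) \<ge> 0" using ann by (simp add: sum_nonneg)
    ultimately show ?thesis using s by (cases "(\<Sum>n<N. a n)") auto
  qed
  have fxN: "f (xs N) \<ge> ereal c" for N
  proof -
    obtain p where p: "(\<Sum>n<N. a n) = ereal p" "p \<le> s" using Pfin by blast
    have "ereal (s + c) \<le> f (xs N) + ereal p" using c(2) part[of N] p by simp
    then show ?thesis using p(2) nn[of "xs N"] by (cases "f (xs N)") auto
  qed
  have "(INF x. f x) < ereal (c / 2)" using inf0 c by simp
  then obtain y0 where "f y0 < ereal (c / 2)" by (auto simp: INF_less_iff)
  then obtain b where b: "f y0 = ereal b" "b < c / 2" using nn[of y0] by (cases "f y0") auto
  define D where "D n = dist (xs n) y0" for n
  have ne: "xs n \<noteq> y0" for n using fxN[of n] b c by auto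
  have Dpos: "D n > 0" for n unfolding D_def using ne by simp
  have Gb: "global_slope f (xs N) \<ge> ereal ((c / 2) / D N)" for N
  proof (cases "f (xs N)")
    case (real v)
    have "v \<ge> c" using fxN[of N] real by simp
    then have "(c / 2) / D N \<le> (v - b) / D N" using b Dpos[of N] by (intro divide_right_mono) auto
    then have "ereal ((c / 2) / D N) \<le> ereal ((v - b) / dist (xs N) y0)" unfolding D_def by simp
    also have "\<dots> \<le> global_slope f (xs N)" using G_lower_real[OF real b(1)] ne[of N] by auto
    finally show ?thesis .
  next
    case PInf then show ?thesis unfolding global_slope_def by simp
  next
    case MInf then show ?thesis using nn[of "xs N"] by simp
  qed
  have ab: "a n \<ge> ereal ((c / 2) * d n / D n)" for n
  proof -
    have "ereal ((c / 2) / D n) * ereal (d n) \<le> a n"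
      unfolding a_def d_def using Gb[of n] by (intro ereal_mult_right_mono) auto
    then show ?thesis by simp
  qed
  have sumb: "(\<Sum>n<N. (c / 2) * d n / D n) \<le> s" for N
  proof -
    obtain p where p: "(\<Sum>n<N. a n) = ereal p" "p \<le> s" using Pfin by blast
    have "ereal (\<Sum>n<N. (c / 2) * d n / D n) = (\<Sum>n<N. ereal ((c / 2) * d n / D n))" by simp
    also have "\<dots> \<le> (\<Sum>n<N. a n)" by (intro sum_mono ab)
    finally show ?thesis using p by simp
  qed
  have lnb: "ln (D (Suc n)) - ln (D n) \<le> d n / D n" for n
  proof -
    have "D (Suc n) \<le> D n + d n" unfolding D_def d_def
      by (metis add.commute dist_commute dist_triangle)
    have "ln (D (Suc n)) - ln (D n) = ln (D (Suc n) / D n)" using Dpos[of n] Dpos[of "Suc n"] by (simp add: ln_div)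
    also have "\<dots> \<le> D (Suc n) / D n - 1" using Dpos by (intro ln_le_minus_one) auto
    also have "\<dots> = (D (Suc n) - D n) / D n" using Dpos[of n] by (simp add: field_simps)
    also have "\<dots> \<le> d n / D n" using \<open>D (Suc n) \<le> D n + d n\<close> Dpos[of n]
      by (intro divide_right_mono) auto
    finally show ?thesis .
  qed
  have lnN: "ln (D N) \<le> ln (D 0) + 2 * s / c" for N
  proof -
    have "ln (D N) - ln (D 0) = (\<Sum>n<N. ln (D (Suc n)) - ln (D n))"
      by (induction N) auto
    also have "\<dots> \<le> (\<Sum>n<N. d n / D n)" by (intro sum_mono lnb)
    also have "\<dots> = (2 / c) * (\<Sum>n<N. (c / 2) * d n / D n)" using c
      by (simp add: sum_distrib_left)
    also have "\<dots> \<le> (2 / c) * s" using sumb c by (intro mult_left_mono) auto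
    finally show ?thesis by simp
  qed
  define K where "K = exp (ln (D 0) + 2 * s / c)"
  have DK: "D N \<le> K" for N
    using lnN[of N] Dpos[of N] unfolding K_def by (metis exp_le_cancel_iff exp_ln)
  have Kpos: "K > 0" unfolding K_def by simp
  have Gb2: "global_slope f (xs N) \<ge> ereal ((c / 2) / K)" for N
  proof -
    have "(c / 2) / K \<le> (c / 2) / D N" using DK[of N] Dpos[of N] c
      by (intro divide_left_mono) auto
    then show ?thesis using Gb[of N] by (meson ereal_less_eq(3) order_trans)
  qed
  have "eventually (\<lambda>n. global_slope f (xs n) < ereal ((c / 2) / K)) sequentially"
    using lim c Kpos by (intro order_tendstoD(2)) auto
  then obtain n where "global_slope f (xs n) < ereal ((c / 2) / K)" by (meson eventually_sequentially order_refl)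
  then show False using Gb2[of n] by simp
qed



lemma approx_point:
  fixes f :: "'a::complete_space \<Rightarrow> ereal"
  assumes lsc: "lsc_fun f" and nn: "\<And>y. f y \<ge> 0" and fx: "f x = ereal r"
    and \<delta>: "\<delta> > 0" and e: "e > 0"
  shows "\<exists>z. dist z x < \<delta> \<and> I_fun f z \<le> ereal (r + e)"
proof -
  have r: "r \<ge> 0" using nn[of x] fx by simp
  define \<theta> where "\<theta> = 1 + e / (r + 1)"
  have \<theta>: "\<theta> > 1" unfolding \<theta>_def using e r by simp
  define \<Lambda> where "\<Lambda> = (r + 1) / \<delta>"
  have \<Lambda>: "\<Lambda> > 0" unfolding \<Lambda>_def using r \<delta> by simp
  define lam where "lam n = \<Lambda> / \<theta> ^ n" for n
  have lampos: "lam n > 0" for n unfolding lam_def using \<Lambda> \<theta> by simp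
  have lamS: "lam n = \<theta> * lam (Suc n)" for n unfolding lam_def using \<theta> by simp
  define ek where "ek l y = (SOME z. f z + ereal (l * dist z y) \<le> f y \<and> (\<forall>w. f z \<le> f w + ereal (l * dist w z)))" for l y
  have ekP: "f (ek l y) + ereal (l * dist (ek l y) y) \<le> f y \<and> (\<forall>w. f (ek l y) \<le> f w + ereal (l * dist w (ek l y)))"
    if "f y < \<infinity>" "l > 0" for l y
    unfolding ek_def by (rule someI_ex) (rule ekeland[OF lsc nn that])
  have ekfin: "f (ek l y) < \<infinity>" if "f y < \<infinity>" "l > 0" for l y
  proof -
    have "f (ek l y) \<le> f (ek l y) + ereal (l * dist (ek l y) y)" using that by (intro add_increasing2) auto
    also have "\<dots> \<le> f y" using ekP[OF that] by simp
    finally have "f (ek l y) \<le> f y" .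
    then show ?thesis using that(1) by (rule le_less_trans)
  qed
  define zs where "zs = rec_nat (ek (lam 0) x) (\<lambda>n z. ek (lam (Suc n)) z)"
  have zs0: "zs 0 = ek (lam 0) x" and zsS: "zs (Suc n) = ek (lam (Suc n)) (zs n)" for n
    by (simp_all add: zs_def)
  have finz: "f (zs n) < \<infinity>" for n
  proof (induction n)
    case 0 then show ?case unfolding zs0 using ekfin[of x "lam 0"] fx lampos by simp
  next
    case (Suc n) then show ?case unfolding zsS using ekfin lampos by simp
  qed
  have P0: "f (zs 0) + ereal (lam 0 * dist (zs 0) x) \<le> f x"
    and Q0: "\<forall>w. f (zs 0) \<le> f w + ereal (lam 0 * dist w (zs 0))"
    using ekP[of x "lam 0"] fx lampos unfolding zs0 by auto
  have PS: "f (zs (Suc n)) + ereal (lam (Suc n) * dist (zs (Suc n)) (zs n)) \<le> f (zs n)"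
    and QS: "\<forall>w. f (zs (Suc n)) \<le> f w + ereal (lam (Suc n) * dist w (zs (Suc n)))" for n
    using ekP[OF finz[of n] lampos[of "Suc n"]] unfolding zsS by auto
  have Q: "\<forall>w. f (zs n) \<le> f w + ereal (lam n * dist w (zs n))" for n
    using Q0 QS by (cases n) auto
  define F where "F n = real_of_ereal (f (zs n))" for n
  have fF: "f (zs n) = ereal (F n)" for n using finz[of n] nn[of "zs n"] unfolding F_def
    by (cases "f (zs n)") auto
  have Fnn: "F n \<ge> 0" for n using nn[of "zs n"] fF[of n] by simp
  have F0: "F 0 + lam 0 * dist (zs 0) x \<le> r" using P0 fF[of 0] fx by simp
  have FS: "F (Suc n) + lam (Suc n) * dist (zs (Suc n)) (zs n) \<le> F n" for n
    using PS[of n] fF[of n] fF[of "Suc n"] by simp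
  have Gle: "global_slope f (zs n) \<le> ereal (lam n)" for n
    using Q[of n] finz[of n] nn lampos[of n]
    by (intro G_le) (auto simp: less_le_not_le dest: order.strict_trans2[OF _ nn])
  define a where "a n = global_slope f (zs n) * ereal (dist (zs n) (zs (Suc n)))" for n
  have ann: "a n \<ge> 0" for n unfolding a_def using G_nonneg[of f "zs n"] by simp
  have aterm: "a n \<le> ereal (\<theta> * (F n - F (Suc n)))" for n
  proof -
    have "a n \<le> ereal (lam n) * ereal (dist (zs n) (zs (Suc n)))"
      unfolding a_def using Gle[of n] by (intro ereal_mult_right_mono) auto
    also have "\<dots> = ereal (\<theta> * (lam (Suc n) * dist (zs (Suc n)) (zs n)))"
      using lamS[of n] by (simp add: dist_commute)
    also have "\<dots> \<le> ereal (\<theta> * (F n - F (Suc n)))"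
      using FS[of n] \<theta> by simp
    finally show ?thesis .
  qed
  have psum: "(\<Sum>n<N. a n) \<le> ereal (\<theta> * (F 0 - F N))" for N
  proof (induction N)
    case 0 then show ?case by (simp add: zero_ereal_def)
  next
    case (Suc N)
    have "(\<Sum>n<Suc N. a n) = (\<Sum>n<N. a n) + a N" by simp
    also have "\<dots> \<le> ereal (\<theta> * (F 0 - F N)) + ereal (\<theta> * (F N - F (Suc N)))"
      by (intro add_mono Suc aterm)
    also have "\<dots> = ereal (\<theta> * (F 0 - F (Suc N)))" by (simp add: algebra_simps)
    finally show ?case .
  qed
  have thr: "\<theta> * (F 0 - F N) \<le> \<theta> * r" for N
  proof -
    have "lam 0 * dist (zs 0) x \<ge> 0" using lampos[of 0] by simp
    then have "F 0 - F N \<le> r" using F0 Fnn[of N] by linarith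
    then show ?thesis using \<theta> by (intro mult_left_mono) auto
  qed
  have psum2: "(\<Sum>n<N. a n) \<le> ereal (\<theta> * r)" for N
    using psum[of N] by (rule order_trans) (simp add: thr)
  have sumle: "suminf a \<le> ereal (\<theta> * r)" by (intro suminf_bound) (use psum2 ann in auto)
  have "\<theta> * r = r + e * (r / (r + 1))" unfolding \<theta>_def using r by (simp add: field_simps)
  also have "\<dots> \<le> r + e * 1" using e r by (intro add_left_mono mult_left_mono) auto
  finally have "\<theta> * r \<le> r + e" by simp
  have lamlim: "lam \<longlonglongrightarrow> 0"
  proof -
    have "(\<lambda>n. \<Lambda> * inverse (\<theta> ^ n)) \<longlonglongrightarrow> \<Lambda> * 0"
      by (intro tendsto_mult tendsto_const LIMSEQ_inverse_realpow_zero \<theta>)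
    then show ?thesis unfolding lam_def by (simp add: divide_inverse)
  qed
  have Glim: "(\<lambda>n. global_slope f (zs n)) \<longlonglongrightarrow> 0"
  proof (rule tendsto_sandwich[of "\<lambda>n. 0" _ _ "\<lambda>n. ereal (lam n)"])
    show "\<forall>\<^sub>F n in sequentially. 0 \<le> global_slope f (zs n)" by (intro always_eventually allI G_nonneg)
    show "\<forall>\<^sub>F n in sequentially. global_slope f (zs n) \<le> ereal (lam n)" by (intro always_eventually allI Gle)
    show "(\<lambda>n. 0::ereal) \<longlonglongrightarrow> 0" by simp
    show "(\<lambda>n. ereal (lam n)) \<longlonglongrightarrow> 0" using lamlim by (simp add: zero_ereal_def)
  qed
  have "I_fun f (zs 0) \<le> suminf a"
    unfolding I_fun_def a_def using Glim by (intro Inf_lower) auto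
  also have "\<dots> \<le> ereal (r + e)" using sumle by (rule order_trans) (simp add: \<open>\<theta> * r \<le> r + e\<close>)
  finally have I: "I_fun f (zs 0) \<le> ereal (r + e)" .
  have "lam 0 * dist (zs 0) x < r + 1" using F0 Fnn[of 0] by simp
  then have "(r + 1) * dist (zs 0) x < (r + 1) * \<delta>" unfolding lam_def \<Lambda>_def using \<delta> r
    by (simp add: field_simps)
  moreover have "r + 1 > 0" using r by simp
  ultimately have "dist (zs 0) x < \<delta>" using mult_less_cancel_left_pos by blast
  with I show ?thesis by blast
qed



theorem theorem6p10:
  fixes f :: "'a::complete_space \<Rightarrow> ereal"
  assumes "\<forall>x. f x \<noteq> - \<infinity>"
    and "\<exists>x. f x \<noteq> \<infinity>"
    and "lsc_fun f"
    and "(INF x. f x) = 0"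
  shows "\<forall>x. f x = lsc_env (I_fun f) x"
proof
  fix x
  have lsc: "lsc_fun f" using assms(3) .
  have nn: "f y \<ge> 0" for y using assms(4) INF_lower[of y UNIV f] by simp
  have Ige: "f y \<le> I_fun f y" for y
    unfolding I_fun_def
  proof (rule Inf_greatest)
    fix s assume "s \<in> {(\<Sum>n. global_slope f (xs n) * ereal (dist (xs n) (xs (Suc n)))) | xs.
                     xs 0 = y \<and> (\<lambda>n. global_slope f (xs n)) \<longlonglongrightarrow> 0}"
    then obtain xs where s_eq: "s = (\<Sum>n. global_slope f (xs n) * ereal (dist (xs n) (xs (Suc n))))"
      and x0: "xs 0 = y" and lim: "(\<lambda>n. global_slope f (xs n)) \<longlonglongrightarrow> 0" by blast
    show "f y \<le> s" using lower_bound[OF nn assms(4) x0 lim] s_eq by simp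
  qed
  have ge: "f x \<le> lsc_env (I_fun f) x"
    unfolding lsc_env_def le_Liminf_iff
  proof (intro allI impI)
    fix c assume "c < f x"
    from lsc_nhds[OF lsc this] show "\<forall>\<^sub>F y in nhds x. c < I_fun f y"
      by eventually_elim (use Ige in \<open>auto intro: less_le_trans\<close>)
  qed
  have le: "lsc_env (I_fun f) x \<le> f x"
  proof (cases "f x")
    case PInf then show ?thesis by simp
  next
    case MInf then show ?thesis using nn[of x] by simp
  next
    case (real r)
    show ?thesis
      unfolding lsc_env_def Liminf_def
    proof (rule SUP_least)
      fix P assume "P \<in> {P. eventually P (nhds x)}"
      then obtain \<delta> where \<delta>: "\<delta> > 0" "\<And>y. dist y x < \<delta> \<Longrightarrow> P y"
        by (auto simp: eventually_nhds_metric)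
      show "(INF y\<in>Collect P. I_fun f y) \<le> f x"
      proof (rule ereal_le_epsilon2)
        fix e :: real assume "e > 0"
        obtain z where z: "dist z x < \<delta>" "I_fun f z \<le> ereal (r + e)"
          using approx_point[OF lsc nn real \<delta>(1) \<open>e > 0\<close>] by blast
        have "(INF y\<in>Collect P. I_fun f y) \<le> I_fun f z" using \<delta>(2)[OF z(1)] by (intro INF_lower) simp
        also have "\<dots> \<le> f x + ereal e" using z(2) real by simp
        finally show "(INF y\<in>Collect P. I_fun f y) \<le> f x + ereal e" .
      qed
    qed
  qed
  show "f x = lsc_env (I_fun f) x" using ge le by (rule antisym)
qed

end
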